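(* Let $\star$ be a continuous and sup-continuous triangle function such that the group of invertible elements of $(\Delta^+,\star)$ is trivial, i.e. $\mathcal U(\Delta^+)=\{\mathcal H_0\}$. Let $(G,\cdot,D,\star)$ and $(G',\cdot,D',\star)$ be two complete invariant probabilistic metric groups. Then the following are equivalent: (1) there is a group isomorphism $\mathcal I:G\to G'$ with $D'(\mathcal I(x),\mathcal I(y))=D(x,y)$ for all $x,y\in G$; (2) there is a monoid isomorphism $\Phi:(Lip^1_\star(G,\Delta^+),\odot)\to(Lip^1_\star(G',\Delta^+),\odot)$ with $\overline{\mathbb D}'(\Phi(f),\Phi(g))=\overline{\mathbb D}(f,g)$ for all $f,g\in Lip^1_\star(G,\Delta^+)$ (where $\overline{\mathbb D}$, $\overline{\mathbb D}'$ are the metrics defined below for $G$ and $G'$ respectively).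
   Context: A distribution function is a nondecreasing, left-continuous function $F:[-\infty,+\infty]\to[0,1]$ with $F(-\infty)=0$, $F(+\infty)=1$; $\Delta^+$ is the set of distribution functions with $F(0)=0$, ordered pointwise (a complete lattice with maximum $\mathcal H_0$ and minimum $\mathcal H_\infty$, where $\mathcal H_0(t)=0$ for $t\le0$, $1$ for $t>0$, and $\mathcal H_\infty(t)=0$ for $t<+\infty$, $\mathcal H_\infty(+\infty)=1$). A triangle function is a binary operation $\star$ on $\Delta^+$ that is commutative, associative, nondecreasing in each argument, with $F\star\mathcal H_0=F$; $\mathcal U(\Delta^+)$ is the group of invertible elements of the monoid $(\Delta^+,\star)$. $\star$ is sup-continuous if $\sup_i(F_i\star L)=(\sup_iF_i)\star L$ for every nonempty family $(F_i)$ and every $L$. $F_n\xrightarrow{w}F$ means $F_n(t)\to F(t)$ at every continuity point $t\in\mathbb R$ of $F$; $\star$ is continuous if $F_n\star L_n\xrightarrow{w}F\star L$ whenever $F_n\xrightarrow{w}F$, $L_n\xrightarrow{w}L$. A probabilistic metric space $(G,D,\star)$ consists of a set $G$, a triangle function $\star$ and $D:G\times G\to\Delta^+$ with (i) $D(p,q)=\mathcal H_0$ iff $p=q$; (ii) $D(p,q)=D(q,p)$; (iii) $D(p,q)\star D(q,r)\le D(p,r)$. If $(G,\cdot)$ is a group and $D(pr,qr)=D(rp,rq)=D(p,q)$ for all $p,q,r$, it is an invariant probabilistic metric group. A sequence $(z_n)$ is Cauchy if $D(z_n,z_p)\xrightarrow{w}\mathcal H_0$ as $n,p\to\infty$; completeness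 means every Cauchy sequence has a point $z$ with $D(z_n,z)\xrightarrow{w}\mathcal H_0$. $Lip^1_\star(G,\Delta^+)$ is the set of maps $f:G\to\Delta^+$ with $D(x,y)\star f(y)\le f(x)$ for all $x,y$. For maps $f,g:G\to\Delta^+$, $(f\odot g)(x)=\sup_{y,z\in G,\ yz=x}f(y)\star g(z)$. $\Pi(G)$ is the set of $f\in Lip^1_\star(G,\Delta^+)$ for which there is a Cauchy sequence $(a_n)\subset G$ with $D(a_n,x)\xrightarrow{w}f(x)$ for all $x$. $\mathbb D(f,g)=\sup_{x\in G}f(x)\star g(x)$ for $f,g\in\Pi(G)$. $\overline{\mathbb D}$ on $Lip^1_\star(G,\Delta^+)$ is: $\overline{\mathbb D}(f,g)=\mathbb D(f,g)$ if $f,g\in\Pi(G)$; $\overline{\mathbb D}(f,g)=\mathcal H_0$ if $f=g$; $\overline{\mathbb D}(f,g)=\mathcal H_\infty$ if $f\ne g$ and $(f,g)\notin\Pi(G)\times\Pi(G)$. *)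

theory Defs
  imports "HOL-Algebra.Group" "HOL-Library.Extended_Real"
begin

type_synonym dfun = "ereal \<Rightarrow> real"

text \<open>Distribution functions on the extended real line; left-continuity is
required at every real point (H_infinity is not left-continuous at +infinity).\<close>
definition distribution_fun :: "dfun \<Rightarrow> bool" where
  "distribution_fun F \<longleftrightarrow> mono F \<and> (\<forall>t. 0 \<le> F t \<and> F t \<le> 1)
     \<and> (\<forall>t::real. ((\<lambda>s. F (ereal s)) \<longlongrightarrow> F (ereal t)) (at_left t))
     \<and> F (-\<infinity>) = 0 \<and> F \<infinity> = 1"

definition Delta_plus :: "dfun set" where
  "Delta_plus = {F. distribution_fun F \<and> F 0 = 0}"

definition H0 :: dfun where
  "H0 t = (if t \<le> 0 then 0 else 1)"

definition Hinf :: dfun where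
  "Hinf t = (if t = \<infinity> then 1 else 0)"

definition dsup :: "dfun set \<Rightarrow> dfun" where
  "dsup S = (\<lambda>t. SUP F\<in>S. F t)"

definition wconv :: "('i \<Rightarrow> dfun) \<Rightarrow> dfun \<Rightarrow> 'i filter \<Rightarrow> bool" where
  "wconv Fs F net \<longleftrightarrow> (\<forall>t::real. isCont (\<lambda>s. F (ereal s)) t \<longrightarrow>
      ((\<lambda>i. Fs i (ereal t)) \<longlongrightarrow> F (ereal t)) net)"

definition triangle_function :: "(dfun \<Rightarrow> dfun \<Rightarrow> dfun) \<Rightarrow> bool" where
  "triangle_function T \<longleftrightarrow>
     (\<forall>F\<in>Delta_plus. \<forall>L\<in>Delta_plus. T F L \<in> Delta_plus)
   \<and> (\<forall>F\<in>Delta_plus. \<forall>L\<in>Delta_plus. T F L = T L F)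
   \<and> (\<forall>F\<in>Delta_plus. \<forall>L\<in>Delta_plus. \<forall>K\<in>Delta_plus. T (T F L) K = T F (T L K))
   \<and> (\<forall>F\<in>Delta_plus. \<forall>F'\<in>Delta_plus. \<forall>L\<in>Delta_plus. F \<le> F' \<longrightarrow> T F L \<le> T F' L)
   \<and> (\<forall>F\<in>Delta_plus. T F H0 = F)"

definition units_Delta :: "(dfun \<Rightarrow> dfun \<Rightarrow> dfun) \<Rightarrow> dfun set" where
  "units_Delta T = {F\<in>Delta_plus. \<exists>L\<in>Delta_plus. T F L = H0}"

definition sup_continuous_tf :: "(dfun \<Rightarrow> dfun \<Rightarrow> dfun) \<Rightarrow> bool" where
  "sup_continuous_tf T \<longleftrightarrow> (\<forall>S L. S \<subseteq> Delta_plus \<and> S \<noteq> {} \<and> L \<in> Delta_plus \<longrightarrow>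
      dsup ((\<lambda>F. T F L) ` S) = T (dsup S) L)"

definition continuous_tf :: "(dfun \<Rightarrow> dfun \<Rightarrow> dfun) \<Rightarrow> bool" where
  "continuous_tf T \<longleftrightarrow> (\<forall>Fs Ls F L. range Fs \<subseteq> Delta_plus \<and> range Ls \<subseteq> Delta_plus
      \<and> F \<in> Delta_plus \<and> L \<in> Delta_plus
      \<and> wconv Fs F sequentially \<and> wconv Ls L sequentially
      \<longrightarrow> wconv (\<lambda>n. T (Fs n) (Ls n)) (T F L) sequentially)"

definition pm_space :: "'a set \<Rightarrow> ('a \<Rightarrow> 'a \<Rightarrow> dfun) \<Rightarrow> (dfun \<Rightarrow> dfun \<Rightarrow> dfun) \<Rightarrow> bool" where
  "pm_space S D T \<longleftrightarrow> triangle_function T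
     \<and> (\<forall>p\<in>S. \<forall>q\<in>S. D p q \<in> Delta_plus)
     \<and> (\<forall>p\<in>S. \<forall>q\<in>S. D p q = H0 \<longleftrightarrow> p = q)
     \<and> (\<forall>p\<in>S. \<forall>q\<in>S. D p q = D q p)
     \<and> (\<forall>p\<in>S. \<forall>q\<in>S. \<forall>r\<in>S. T (D p q) (D q r) \<le> D p r)"

definition inv_pm_group :: "('a, 'b) monoid_scheme \<Rightarrow> ('a \<Rightarrow> 'a \<Rightarrow> dfun) \<Rightarrow> (dfun \<Rightarrow> dfun \<Rightarrow> dfun) \<Rightarrow> bool" where
  "inv_pm_group G D T \<longleftrightarrow> group G \<and> pm_space (carrier G) D T
     \<and> (\<forall>p\<in>carrier G. \<forall>q\<in>carrier G. \<forall>r\<in>carrier G.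
          D (p \<otimes>\<^bsub>G\<^esub> r) (q \<otimes>\<^bsub>G\<^esub> r) = D p q \<and> D (r \<otimes>\<^bsub>G\<^esub> p) (r \<otimes>\<^bsub>G\<^esub> q) = D p q)"

definition pm_cauchy :: "'a set \<Rightarrow> ('a \<Rightarrow> 'a \<Rightarrow> dfun) \<Rightarrow> (nat \<Rightarrow> 'a) \<Rightarrow> bool" where
  "pm_cauchy S D z \<longleftrightarrow> range z \<subseteq> S \<and>
     wconv (\<lambda>(n, p). D (z n) (z p)) H0 (sequentially \<times>\<^sub>F sequentially)"

definition pm_complete :: "'a set \<Rightarrow> ('a \<Rightarrow> 'a \<Rightarrow> dfun) \<Rightarrow> bool" where
  "pm_complete S D \<longleftrightarrow> (\<forall>z. pm_cauchy S D z \<longrightarrow>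
      (\<exists>x\<in>S. wconv (\<lambda>n. D (z n) x) H0 sequentially))"

definition Lip1 :: "(dfun \<Rightarrow> dfun \<Rightarrow> dfun) \<Rightarrow> 'a set \<Rightarrow> ('a \<Rightarrow> 'a \<Rightarrow> dfun) \<Rightarrow> ('a \<Rightarrow> dfun) set" where
  "Lip1 T S D = {f \<in> S \<rightarrow>\<^sub>E Delta_plus. \<forall>x\<in>S. \<forall>y\<in>S. T (D x y) (f y) \<le> f x}"

definition odot :: "(dfun \<Rightarrow> dfun \<Rightarrow> dfun) \<Rightarrow> ('a, 'b) monoid_scheme \<Rightarrow>
    ('a \<Rightarrow> dfun) \<Rightarrow> ('a \<Rightarrow> dfun) \<Rightarrow> ('a \<Rightarrow> dfun)" where
  "odot T G f g = restrict (\<lambda>x. dsup {T (f y) (g z) | y z.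
      y \<in> carrier G \<and> z \<in> carrier G \<and> y \<otimes>\<^bsub>G\<^esub> z = x}) (carrier G)"

definition PiG :: "(dfun \<Rightarrow> dfun \<Rightarrow> dfun) \<Rightarrow> 'a set \<Rightarrow> ('a \<Rightarrow> 'a \<Rightarrow> dfun) \<Rightarrow> ('a \<Rightarrow> dfun) set" where
  "PiG T S D = {f \<in> Lip1 T S D. \<exists>a. pm_cauchy S D a \<and>
      (\<forall>x\<in>S. wconv (\<lambda>n. D (a n) x) (f x) sequentially)}"

definition DD :: "(dfun \<Rightarrow> dfun \<Rightarrow> dfun) \<Rightarrow> 'a set \<Rightarrow> ('a \<Rightarrow> dfun) \<Rightarrow> ('a \<Rightarrow> dfun) \<Rightarrow> dfun" where
  "DD T S f g = dsup ((\<lambda>x. T (f x) (g x)) ` S)"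

definition DDbar :: "(dfun \<Rightarrow> dfun \<Rightarrow> dfun) \<Rightarrow> 'a set \<Rightarrow> ('a \<Rightarrow> 'a \<Rightarrow> dfun) \<Rightarrow>
    ('a \<Rightarrow> dfun) \<Rightarrow> ('a \<Rightarrow> dfun) \<Rightarrow> dfun" where
  "DDbar T S D f g = (if f \<in> PiG T S D \<and> g \<in> PiG T S D then DD T S f g
      else if f = g then H0 else Hinf)"

end

theory Submission
  imports Defs "HOL-Analysis.Borel_Space"
begin


lemma DP_dist: "F \<in> Delta_plus \<Longrightarrow> distribution_fun F"
  by (simp add: Delta_plus_def)
lemma DP_mono: "F \<in> Delta_plus \<Longrightarrow> mono F"
  by (simp add: Delta_plus_def distribution_fun_def)
lemma DP_ge0: "F \<in> Delta_plus \<Longrightarrow> 0 \<le> F t"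
  by (simp add: Delta_plus_def distribution_fun_def)
lemma DP_le1: "F \<in> Delta_plus \<Longrightarrow> F t \<le> 1"
  by (simp add: Delta_plus_def distribution_fun_def)
lemma DP_0: "F \<in> Delta_plus \<Longrightarrow> F 0 = 0"
  by (simp add: Delta_plus_def)
lemma DP_inf: "F \<in> Delta_plus \<Longrightarrow> F \<infinity> = 1"
  by (simp add: Delta_plus_def distribution_fun_def)
lemma DP_minf: "F \<in> Delta_plus \<Longrightarrow> F (-\<infinity>) = 0"
  by (simp add: Delta_plus_def distribution_fun_def)
lemma DP_lc: "F \<in> Delta_plus \<Longrightarrow> ((\<lambda>s. F (ereal s)) \<longlongrightarrow> F (ereal t)) (at_left t)"
  by (simp add: Delta_plus_def distribution_fun_def)
lemma DP_nonpos: "F \<in> Delta_plus \<Longrightarrow> t \<le> 0 \<Longrightarrow> F t = 0"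
  using DP_mono[of F] DP_0[of F] DP_ge0[of F t] by (metis antisym monoD)
lemma DP_monoD: "F \<in> Delta_plus \<Longrightarrow> s \<le> t \<Longrightarrow> F s \<le> F t"
  using DP_mono monoD by blast
lemma DP_le_H0: "F \<in> Delta_plus \<Longrightarrow> F \<le> H0"
  by (auto simp: le_fun_def H0_def DP_nonpos DP_le1)
lemma DP_eqI:
  assumes "F \<in> Delta_plus" "G \<in> Delta_plus" "\<And>r. F (ereal r) = G (ereal r)"
  shows "F = G"
proof
  fix t show "F t = G t" using assms by (cases t) (auto simp: DP_inf DP_minf)
qed

lemma H0_DP: "H0 \<in> Delta_plus"
proof -
  have lc: "((\<lambda>s. H0 (ereal s)) \<longlongrightarrow> H0 (ereal t)) (at_left t)" for t
  proof (cases "t \<le> 0")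
    case True
    have "eventually (\<lambda>s. s \<in> {t-1<..<t}) (at_left t)" by (rule eventually_at_left_real) simp
    then have "eventually (\<lambda>s. H0 (ereal s) = H0 (ereal t)) (at_left t)"
      by eventually_elim (use True in \<open>auto simp: H0_def\<close>)
    then show ?thesis by (rule tendsto_eventually)
  next
    case False
    have "eventually (\<lambda>s. s \<in> {0<..<t}) (at_left t)" by (rule eventually_at_left_real) (use False in simp)
    then have "eventually (\<lambda>s. H0 (ereal s) = H0 (ereal t)) (at_left t)"
      by eventually_elim (use False in \<open>auto simp: H0_def\<close>)
    then show ?thesis by (rule tendsto_eventually)
  qed
  have "mono H0" by (auto simp: mono_def H0_def)
  then show ?thesis using lc
    by (auto simp: Delta_plus_def distribution_fun_def H0_def)
qed

lemma H0_real_pos: "r > 0 \<Longrightarrow> H0 (ereal r) = 1" by (simp add: H0_def)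
lemma H0_real_nonpos: "r \<le> 0 \<Longrightarrow> H0 (ereal r) = 0" by (simp add: H0_def)

locale tfun =
  fixes T :: "dfun \<Rightarrow> dfun \<Rightarrow> dfun"
  assumes tf: "triangle_function T"
begin
lemma T_DP: "F \<in> Delta_plus \<Longrightarrow> L \<in> Delta_plus \<Longrightarrow> T F L \<in> Delta_plus"
  using tf by (simp add: triangle_function_def)
lemma T_comm: "F \<in> Delta_plus \<Longrightarrow> L \<in> Delta_plus \<Longrightarrow> T F L = T L F"
  using tf by (simp add: triangle_function_def)
lemma T_assoc: "F \<in> Delta_plus \<Longrightarrow> L \<in> Delta_plus \<Longrightarrow> K \<in> Delta_plus \<Longrightarrow> T (T F L) K = T F (T L K)"
  using tf unfolding triangle_function_def by blast
lemma T_mono1: "F \<in> Delta_plus \<Longrightarrow> F' \<in> Delta_plus \<Longrightarrow> L \<in> Delta_plus \<Longrightarrow> F \<le> F' \<Longrightarrow> T F L \<le> T F' L"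
  using tf by (simp add: triangle_function_def)
lemma T_mono2: "F \<in> Delta_plus \<Longrightarrow> L \<in> Delta_plus \<Longrightarrow> L' \<in> Delta_plus \<Longrightarrow> L \<le> L' \<Longrightarrow> T F L \<le> T F L'"
  using T_mono1[of L L' F] T_comm by metis
lemma T_mono: "F \<in> Delta_plus \<Longrightarrow> F' \<in> Delta_plus \<Longrightarrow> L \<in> Delta_plus \<Longrightarrow> L' \<in> Delta_plus
   \<Longrightarrow> F \<le> F' \<Longrightarrow> L \<le> L' \<Longrightarrow> T F L \<le> T F' L'"
  by (meson T_mono1 T_mono2 order_trans)
lemma T_H0: "F \<in> Delta_plus \<Longrightarrow> T F H0 = F"
  using tf by (simp add: triangle_function_def)
lemma T_H0': "F \<in> Delta_plus \<Longrightarrow> T H0 F = F"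
  using T_H0 T_comm H0_DP by metis
lemma T_le1: "F \<in> Delta_plus \<Longrightarrow> L \<in> Delta_plus \<Longrightarrow> T F L \<le> F"
  using T_mono2[of F L H0] T_H0 H0_DP DP_le_H0 by metis
lemma T_le2: "F \<in> Delta_plus \<Longrightarrow> L \<in> Delta_plus \<Longrightarrow> T F L \<le> L"
  using T_le1 T_comm by metis
end

lemma wconv_const: "wconv (\<lambda>n. F) F net"
  by (simp add: wconv_def)

lemma cont_point_left:
  assumes "F \<in> Delta_plus" "b < r"
  obtains c where "b < c" "c < r" "isCont (\<lambda>s. F (ereal s)) c"
proof -
  have "mono (\<lambda>s. F (ereal s))" using DP_mono[OF assms(1)] by (auto simp: mono_def)
  from open_minus_countable[OF mono_ctble_discont[OF this], of "{b<..<r}"] assms(2)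
  show ?thesis using that by auto
qed

lemma wconv_le:
  assumes Fs: "\<And>n. Fs n \<le> G" and w: "wconv Fs F sequentially"
    and F: "F \<in> Delta_plus" and G: "G \<in> Delta_plus"
  shows "F \<le> G"
proof (rule le_funI)
  fix t
  show "F t \<le> G t"
  proof (cases t)
    case (real r)
    show ?thesis
    proof (rule ccontr)
      assume "\<not> F t \<le> G t"
      then have lt: "G (ereal r) < F (ereal r)" using real by simp
      have "eventually (\<lambda>s. G (ereal r) < F (ereal s)) (at_left r)"
        using order_tendstoD(1)[OF DP_lc[OF F] lt] .
      then obtain b where b: "b < r" "\<And>y. b < y \<Longrightarrow> y < r \<Longrightarrow> G (ereal r) < F (ereal y)"
        by (auto simp: eventually_at_left_field)
      obtain c where c: "b < c" "c < r" "isCont (\<lambda>s. F (ereal s)) c"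
        using cont_point_left[OF F b(1)] by blast
      have "(\<lambda>n. Fs n (ereal c)) \<longlonglongrightarrow> F (ereal c)" using w c(3) by (simp add: wconv_def)
      then have "F (ereal c) \<le> G (ereal c)"
        by (rule LIMSEQ_le_const2) (use Fs in \<open>auto simp: le_fun_def\<close>)
      also have "\<dots> \<le> G (ereal r)" using c(2) by (intro DP_monoD[OF G]) simp
      finally show False using b(2)[OF c(1,2)] by simp
    qed
  qed (use F G in \<open>auto simp: DP_inf DP_minf DP_ge0\<close>)
qed

lemma wconv_ge:
  assumes Fs: "\<And>n. G \<le> Fs n" and w: "wconv Fs F sequentially"
    and F: "F \<in> Delta_plus" and G: "G \<in> Delta_plus"
  shows "G \<le> F"
proof (rule le_funI)
  fix t
  show "G t \<le> F t"
  proof (cases t)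
    case (real r)
    show ?thesis
    proof (rule ccontr)
      assume "\<not> G t \<le> F t"
      then have lt: "F (ereal r) < G (ereal r)" using real by simp
      have "eventually (\<lambda>s. F (ereal r) < G (ereal s)) (at_left r)"
        using order_tendstoD(1)[OF DP_lc[OF G] lt] .
      then obtain b where b: "b < r" "\<And>y. b < y \<Longrightarrow> y < r \<Longrightarrow> F (ereal r) < G (ereal y)"
        by (auto simp: eventually_at_left_field)
      obtain c where c: "b < c" "c < r" "isCont (\<lambda>s. F (ereal s)) c"
        using cont_point_left[OF F b(1)] by blast
      have "(\<lambda>n. Fs n (ereal c)) \<longlonglongrightarrow> F (ereal c)" using w c(3) by (simp add: wconv_def)
      then have "G (ereal c) \<le> F (ereal c)"
        by (rule LIMSEQ_le_const) (use Fs in \<open>auto simp: le_fun_def\<close>)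
      also have "\<dots> \<le> F (ereal r)" using c(2) by (intro DP_monoD[OF F]) simp
      finally show False using b(2)[OF c(1,2)] by simp
    qed
  qed (use F G in \<open>auto simp: DP_inf DP_minf DP_ge0\<close>)
qed



definition E :: "nat \<Rightarrow> dfun" where
  "E n t = (if t \<le> ereal (1 / real (Suc n)) then 0 else if t = \<infinity> then 1 else 1 - 1 / real (Suc n))"

lemma E_DP: "E n \<in> Delta_plus"
proof -
  let ?c = "1 / real (Suc n)"
  have c0: "0 < ?c" by simp
  have c1: "?c \<le> 1" by simp
  have mono: "mono (E n)"
  proof (rule monoI)
    fix s t :: ereal assume st: "s \<le> t"
    have le1: "E n x \<le> 1" for x using c1 by (simp add: E_def)
    show "E n s \<le> E n t"
    proof (cases "t \<le> ereal ?c")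
      case True
      then have "s \<le> ereal ?c" using st by (rule order_trans[rotated])
      then show ?thesis using True by (simp add: E_def)
    next
      case F1: False
      show ?thesis
      proof (cases "t = \<infinity>")
        case True then show ?thesis using F1 le1[of s] by (simp add: E_def)
      next
        case False
        then have "s \<noteq> \<infinity>" using st by auto
        then show ?thesis using F1 False c1 by (simp add: E_def)
      qed
    qed
  qed
  have lc: "((\<lambda>s. E n (ereal s)) \<longlongrightarrow> E n (ereal t)) (at_left t)" for t
  proof (cases "t \<le> ?c")
    case True
    have "eventually (\<lambda>s. s \<in> {t-1<..<t}) (at_left t)" by (rule eventually_at_left_real) simp
    then have "eventually (\<lambda>s. E n (ereal s) = E n (ereal t)) (at_left t)"
      by eventually_elim (use True in \<open>auto simp: E_def\<close>)
    then show ?thesis by (rule tendsto_eventually)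
  next
    case False
    have "eventually (\<lambda>s. s \<in> {?c<..<t}) (at_left t)" by (rule eventually_at_left_real) (use False in simp)
    then have "eventually (\<lambda>s. E n (ereal s) = E n (ereal t)) (at_left t)"
      by eventually_elim (use False in \<open>auto simp: E_def\<close>)
    then show ?thesis by (rule tendsto_eventually)
  qed
  have "0 \<le> E n t \<and> E n t \<le> 1" for t using c1 by (auto simp: E_def)
  moreover have "E n (-\<infinity>) = 0" "E n \<infinity> = 1" "E n 0 = 0" using c0 by (auto simp: E_def)
  ultimately show ?thesis using mono lc
    by (auto simp: Delta_plus_def distribution_fun_def)
qed

lemma E_mono: "n \<le> m \<Longrightarrow> E n \<le> E m"
proof (rule le_funI)
  fix t assume nm: "n \<le> m"
  have le: "1 / real (Suc m) \<le> 1 / real (Suc n)" using nm by (simp add: frac_le)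
  then have le2: "1 - 1 / real (Suc n) \<le> 1 - 1 / real (Suc m)" by simp
  show "E n t \<le> E m t"
  proof (cases "t \<le> ereal (1 / real (Suc n))")
    case True then show ?thesis by (auto simp: E_def)
  next
    case False
    then have "\<not> t \<le> ereal (1 / real (Suc m))" using le by (meson ereal_less_eq(3) order_trans)
    then show ?thesis using False le2 by (auto simp: E_def)
  qed
qed

lemma E_wconv: "wconv E H0 sequentially"
  unfolding wconv_def
proof (intro allI impI)
  fix t :: real
  show "(\<lambda>n. E n (ereal t)) \<longlonglongrightarrow> H0 (ereal t)"
  proof (cases "t \<le> 0")
    case True
    have "E n (ereal t) = 0" for n
    proof -
      have "t \<le> 1 / real (Suc n)" using True by (smt (verit) of_nat_0_less_iff zero_less_Suc zero_less_divide_1_iff)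
      then show ?thesis by (simp add: E_def)
    qed
    then show ?thesis using True by (simp add: H0_def)
  next
    case False
    obtain N :: nat where N: "1 / t < real N"
      using reals_Archimedean2 by blast
    have ev: "eventually (\<lambda>n. E n (ereal t) = 1 - 1 / real (Suc n)) sequentially"
      unfolding eventually_sequentially
    proof (intro exI allI impI)
      fix n assume "N \<le> n"
      then have "1 / t < real (Suc n)" using N by linarith
      then have "1 / real (Suc n) < t" using False
        by (metis divide_less_eq mult.commute not_le of_nat_0_less_iff zero_less_Suc)
      then show "E n (ereal t) = 1 - 1 / real (Suc n)" by (auto simp: E_def)
    qed
    have "(\<lambda>n. 1 / real (Suc n)) \<longlonglongrightarrow> 0"
      using LIMSEQ_inverse_real_of_nat by (simp add: inverse_eq_divide)
    then have "(\<lambda>n. 1 - 1 / real (Suc n)) \<longlonglongrightarrow> 1 - 0"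
      by (intro tendsto_diff tendsto_const)
    then have "(\<lambda>n. E n (ereal t)) \<longlonglongrightarrow> 1"
      using tendsto_cong[OF ev] by simp
    then show ?thesis using False by (simp add: H0_def)
  qed
qed

lemma E_below:
  assumes F: "F \<in> Delta_plus" and gt: "1 - 1 / real (Suc n) < F (ereal (1 / real (Suc n)))"
  shows "E n \<le> F"
proof (rule le_funI)
  fix t
  show "E n t \<le> F t"
  proof (cases "t \<le> ereal (1 / real (Suc n))")
    case True then show ?thesis using DP_ge0[OF F] by (simp add: E_def)
  next
    case False
    then have "F (ereal (1 / real (Suc n))) \<le> F t" by (intro DP_monoD[OF F]) simp
    then show ?thesis using False gt DP_inf[OF F] by (auto simp: E_def)
  qed
qed

lemma dsup_bdd: "S \<subseteq> Delta_plus \<Longrightarrow> bdd_above ((\<lambda>F. F t) ` S)"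
  by (rule bdd_aboveI[of _ 1]) (auto intro: DP_le1)

lemma dsup_upper: "S \<subseteq> Delta_plus \<Longrightarrow> F \<in> S \<Longrightarrow> F \<le> dsup S"
  unfolding dsup_def le_fun_def by (auto intro!: cSUP_upper dsup_bdd)

lemma dsup_least: "S \<noteq> {} \<Longrightarrow> (\<And>F. F \<in> S \<Longrightarrow> F \<le> G) \<Longrightarrow> dsup S \<le> G"
  unfolding dsup_def le_fun_def by (auto intro!: cSUP_least)

lemma dsup_DP:
  assumes S: "S \<subseteq> Delta_plus" "S \<noteq> {}"
  shows "dsup S \<in> Delta_plus"
proof -
  let ?g = "dsup S"
  have mono: "mono ?g"
    unfolding mono_def dsup_def
    by (auto intro!: cSUP_mono dsup_bdd S) (meson DP_monoD S(1) subsetD)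
  have g_eq: "?g t = (SUP F\<in>S. F t)" for t by (simp add: dsup_def)
  have bnd: "0 \<le> ?g t \<and> ?g t \<le> 1" for t
  proof
    obtain F where F: "F \<in> S" using S by blast
    have "F t \<le> ?g t" using dsup_upper[OF S(1) F] by (simp add: le_fun_def)
    then show "0 \<le> ?g t" using DP_ge0[of F t] F S by auto
    show "?g t \<le> 1" unfolding g_eq by (rule cSUP_least[OF S(2)]) (meson DP_le1 S(1) subsetD)
  qed
  have const: "\<forall>F\<in>S. F t = c \<Longrightarrow> ?g t = c" for t c
  proof -
    assume a: "\<forall>F\<in>S. F t = c"
    have "(SUP F\<in>S. F t) = (SUP F\<in>S. c)" using a by (intro SUP_cong) auto
    then show ?thesis unfolding g_eq using S(2) by simp
  qed
  have lc: "((\<lambda>s. ?g (ereal s)) \<longlongrightarrow> ?g (ereal t)) (at_left t)" for t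
  proof (rule order_tendstoI)
    fix a assume "a < ?g (ereal t)"
    then obtain F where F: "F \<in> S" "a < F (ereal t)"
      unfolding g_eq using less_cSUP_iff[OF S(2) dsup_bdd[OF S(1)]] by blast
    have "eventually (\<lambda>s. a < F (ereal s)) (at_left t)"
      using order_tendstoD(1)[OF DP_lc[of F t] F(2)] F(1) S(1) by blast
    then show "eventually (\<lambda>s. a < ?g (ereal s)) (at_left t)"
      proof eventually_elim
      case (elim s)
      have "F (ereal s) \<le> ?g (ereal s)" using dsup_upper[OF S(1) F(1)] by (simp add: le_fun_def)
      then show ?case using elim by simp
    qed
  next
    fix a assume a: "?g (ereal t) < a"
    have "eventually (\<lambda>s. s \<in> {t-1<..<t}) (at_left t)" by (rule eventually_at_left_real) simp
    then show "eventually (\<lambda>s. ?g (ereal s) < a) (at_left t)"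
    proof eventually_elim
      case (elim s)
      then have "?g (ereal s) \<le> ?g (ereal t)" using mono by (auto simp: mono_def)
      then show ?case using a by simp
    qed
  qed
  have "?g (-\<infinity>) = 0" "?g \<infinity> = 1" "?g 0 = 0"
    using S by (auto intro!: const simp: DP_minf DP_inf DP_0)
  then show ?thesis using mono lc bnd by (auto simp: Delta_plus_def distribution_fun_def)
qed



lemma cont_app:
  assumes "continuous_tf T" "\<And>n. Fs n \<in> Delta_plus" "\<And>n. Ls n \<in> Delta_plus"
    "F \<in> Delta_plus" "L \<in> Delta_plus" "wconv Fs F sequentially" "wconv Ls L sequentially"
  shows "wconv (\<lambda>n. T (Fs n) (Ls n)) (T F L) sequentially"
  using assms unfolding continuous_tf_def by blast

lemma H0_isCont_pos: "0 < t \<Longrightarrow> isCont (\<lambda>s. H0 (ereal s)) t"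
proof -
  assume t: "0 < t"
  have "eventually (\<lambda>s. 0 < s) (at t)" using order_tendstoD(1)[OF tendsto_ident_at t] .
  then have "eventually (\<lambda>s. H0 (ereal s) = H0 (ereal t)) (at t)"
    by eventually_elim (use t in \<open>simp add: H0_def\<close>)
  then show ?thesis unfolding isCont_def by (rule tendsto_eventually)
qed

locale pmg = tfun T for T +
  fixes G (structure) and D
  assumes cont: "continuous_tf T" and supc: "sup_continuous_tf T"
    and ipg: "inv_pm_group G D T" and compl: "pm_complete (carrier G) D"
begin

lemma is_group: "group G" using ipg by (simp add: inv_pm_group_def)

sublocale group G by (rule is_group)

lemma pms: "pm_space (carrier G) D T" using ipg by (simp add: inv_pm_group_def)

lemma D_DP: "p \<in> carrier G \<Longrightarrow> q \<in> carrier G \<Longrightarrow> D p q \<in> Delta_plus"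
  using pms by (simp add: pm_space_def)
lemma D_H0: "p \<in> carrier G \<Longrightarrow> q \<in> carrier G \<Longrightarrow> D p q = H0 \<longleftrightarrow> p = q"
  using pms by (simp add: pm_space_def)
lemma D_refl: "p \<in> carrier G \<Longrightarrow> D p p = H0"
  using D_H0 by blast
lemma D_sym: "p \<in> carrier G \<Longrightarrow> q \<in> carrier G \<Longrightarrow> D p q = D q p"
  using pms by (simp add: pm_space_def)
lemma D_tri: "p \<in> carrier G \<Longrightarrow> q \<in> carrier G \<Longrightarrow> r \<in> carrier G \<Longrightarrow> T (D p q) (D q r) \<le> D p r"
  using pms by (simp add: pm_space_def)
lemma D_rinv: "p \<in> carrier G \<Longrightarrow> q \<in> carrier G \<Longrightarrow> r \<in> carrier G \<Longrightarrow> D (p \<otimes> r) (q \<otimes> r) = D p q"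
  using ipg by (simp add: inv_pm_group_def)
lemma D_linv: "p \<in> carrier G \<Longrightarrow> q \<in> carrier G \<Longrightarrow> r \<in> carrier G \<Longrightarrow> D (r \<otimes> p) (r \<otimes> q) = D p q"
  using ipg by (simp add: inv_pm_group_def)

abbreviation "Lip \<equiv> Lip1 T (carrier G) D"
abbreviation "od \<equiv> odot T G"

definition pt :: "'a \<Rightarrow> 'a \<Rightarrow> dfun" where "pt a = restrict (D a) (carrier G)"

lemma Lip_DP: "f \<in> Lip \<Longrightarrow> x \<in> carrier G \<Longrightarrow> f x \<in> Delta_plus"
  by (auto simp: Lip1_def)
lemma Lip_ineq: "f \<in> Lip \<Longrightarrow> x \<in> carrier G \<Longrightarrow> y \<in> carrier G \<Longrightarrow> T (D x y) (f y) \<le> f x"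
  by (auto simp: Lip1_def)
lemma Lip_ext: "f \<in> Lip \<Longrightarrow> f \<in> extensional (carrier G)"
  by (auto simp: Lip1_def PiE_def)

lemma pt_Lip: "a \<in> carrier G \<Longrightarrow> pt a \<in> Lip"
proof -
  assume a: "a \<in> carrier G"
  have 1: "restrict (D a) (carrier G) \<in> carrier G \<rightarrow>\<^sub>E Delta_plus" using a D_DP by auto
  have 2: "T (D x y) (restrict (D a) (carrier G) y) \<le> restrict (D a) (carrier G) x"
    if xy: "x \<in> carrier G" "y \<in> carrier G" for x y
    using D_tri[OF xy(1) xy(2) a] xy a by (simp add: D_sym[of a])
  show ?thesis using 1 2 by (simp add: Lip1_def pt_def)
qed

definition OS :: "('a \<Rightarrow> dfun) \<Rightarrow> ('a \<Rightarrow> dfun) \<Rightarrow> 'a \<Rightarrow> dfun set" where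
  "OS f g x = {T (f y) (g z) | y z. y \<in> carrier G \<and> z \<in> carrier G \<and> y \<otimes> z = x}"

lemma od_val: "x \<in> carrier G \<Longrightarrow> od f g x = dsup (OS f g x)"
  by (simp add: odot_def OS_def)

lemma OS_DP: assumes "f \<in> Lip" "g \<in> Lip" shows "OS f g x \<subseteq> Delta_plus"
proof
  fix F assume "F \<in> OS f g x"
  then obtain y z where "y \<in> carrier G" "z \<in> carrier G" "F = T (f y) (g z)" by (auto simp: OS_def)
  then show "F \<in> Delta_plus" using assms by (simp add: T_DP Lip_DP)
qed

lemma OS_mem: "y \<in> carrier G \<Longrightarrow> z \<in> carrier G \<Longrightarrow> T (f y) (g z) \<in> OS f g (y \<otimes> z)"
  by (auto simp: OS_def)

lemma OS_ne: "x \<in> carrier G \<Longrightarrow> OS f g x \<noteq> {}"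
  using OS_mem[of \<one> x f g] by auto

lemma od_upper: "f \<in> Lip \<Longrightarrow> g \<in> Lip \<Longrightarrow> y \<in> carrier G \<Longrightarrow> z \<in> carrier G
   \<Longrightarrow> T (f y) (g z) \<le> od f g (y \<otimes> z)"
  using od_val[of "y \<otimes> z" f g] dsup_upper[OF OS_DP OS_mem] by simp

lemma od_least: "x \<in> carrier G \<Longrightarrow>
   (\<And>y z. y \<in> carrier G \<Longrightarrow> z \<in> carrier G \<Longrightarrow> y \<otimes> z = x \<Longrightarrow> T (f y) (g z) \<le> H)
   \<Longrightarrow> od f g x \<le> H"
  unfolding od_val by (rule dsup_least[OF OS_ne]) (auto simp: OS_def)

lemma od_ext: "od f g \<in> extensional (carrier G)"
  by (simp add: odot_def)

lemma pt_ext: "pt a \<in> extensional (carrier G)"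
  by (simp add: pt_def)

lemma fun_eqI_ext: "f \<in> extensional (carrier G) \<Longrightarrow> g \<in> extensional (carrier G)
  \<Longrightarrow> (\<And>x. x \<in> carrier G \<Longrightarrow> f x = g x) \<Longrightarrow> f = g"
  by (rule extensionalityI)

lemma od_pt: assumes a: "a \<in> carrier G" and b: "b \<in> carrier G"
  shows "od (pt a) (pt b) = pt (a \<otimes> b)"
proof (rule fun_eqI_ext[OF od_ext pt_ext])
  fix x assume x: "x \<in> carrier G"
  have ab: "a \<otimes> b \<in> carrier G" using a b by simp
  show "od (pt a) (pt b) x = pt (a \<otimes> b) x"
  proof (rule antisym)
    show "od (pt a) (pt b) x \<le> pt (a \<otimes> b) x"
    proof (rule od_least[OF x])
      fix y z assume yz: "y \<in> carrier G" "z \<in> carrier G" "y \<otimes> z = x"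
      have 1: "D a y = D (a \<otimes> b) (y \<otimes> b)" using D_rinv[OF a yz(1) b] by simp
      have 2: "D b z = D (y \<otimes> b) x" using D_linv[OF b yz(2) yz(1)] yz(3) by simp
      show "T (pt a y) (pt b z) \<le> pt (a \<otimes> b) x"
        using D_tri[OF ab _ x, of "y \<otimes> b"] yz a b x 1 2 by (simp add: pt_def)
    qed
  next
    have "pt (a \<otimes> b) x = T (pt a a) (pt b (inv a \<otimes> x))"
    proof -
      have "D (a \<otimes> b) x = D (a \<otimes> b) (a \<otimes> (inv a \<otimes> x))"
        using a x by (simp add: m_assoc[symmetric])
      also have "\<dots> = D b (inv a \<otimes> x)" using D_linv a b x by simp
      finally show ?thesis using a b x D_refl[OF a] T_H0'[OF D_DP[OF b, of "inv a \<otimes> x"]]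
        by (simp add: pt_def)
    qed
    also have "\<dots> \<le> od (pt a) (pt b) (a \<otimes> (inv a \<otimes> x))"
      by (rule od_upper) (use a b x pt_Lip in auto)
    also have "a \<otimes> (inv a \<otimes> x) = x" using a x by (simp add: m_assoc[symmetric])
    finally show "pt (a \<otimes> b) x \<le> od (pt a) (pt b) x" .
  qed
qed

lemma od_unit_left: assumes u: "u \<in> Lip" shows "od (pt \<one>) u = u"
proof (rule fun_eqI_ext[OF od_ext Lip_ext[OF u]])
  fix x assume x: "x \<in> carrier G"
  show "od (pt \<one>) u x = u x"
  proof (rule antisym)
    show "od (pt \<one>) u x \<le> u x"
    proof (rule od_least[OF x])
      fix y z assume yz: "y \<in> carrier G" "z \<in> carrier G" "y \<otimes> z = x"
      have "D \<one> y = D z x" using D_rinv[of \<one> y z] yz by simp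
      then show "T (pt \<one> y) (u z) \<le> u x"
        using Lip_ineq[OF u x yz(2)] yz x by (simp add: pt_def D_sym[of z x])
    qed
  next
    have "u x = T (pt \<one> \<one>) (u x)" using T_H0'[OF Lip_DP[OF u x]] by (simp add: pt_def D_refl)
    also have "\<dots> \<le> od (pt \<one>) u (\<one> \<otimes> x)" by (rule od_upper) (use x u pt_Lip in auto)
    finally show "u x \<le> od (pt \<one>) u x" using x by simp
  qed
qed

lemma od_unit_right: assumes u: "u \<in> Lip" shows "od u (pt \<one>) = u"
proof (rule fun_eqI_ext[OF od_ext Lip_ext[OF u]])
  fix x assume x: "x \<in> carrier G"
  show "od u (pt \<one>) x = u x"
  proof (rule antisym)
    show "od u (pt \<one>) x \<le> u x"
    proof (rule od_least[OF x])
      fix y z assume yz: "y \<in> carrier G" "z \<in> carrier G" "y \<otimes> z = x"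
      have "D \<one> z = D y x" using D_linv[of \<one> z y] yz by simp
      then have "T (u y) (pt \<one> z) = T (D x y) (u y)"
        using yz x T_comm[OF Lip_DP[OF u yz(1)] D_DP[OF yz(1) x]] by (simp add: pt_def D_sym[of y x])
      then show "T (u y) (pt \<one> z) \<le> u x"
        using Lip_ineq[OF u x yz(1)] by simp
    qed
  next
    have "u x = T (u x) (pt \<one> \<one>)" using T_H0[OF Lip_DP[OF u x]] by (simp add: pt_def D_refl)
    also have "\<dots> \<le> od u (pt \<one>) (x \<otimes> \<one>)" by (rule od_upper) (use x u pt_Lip in auto)
    finally show "u x \<le> od u (pt \<one>) x" using x by simp
  qed
qed

end


context pmg begin

lemma supc_app: "S \<subseteq> Delta_plus \<Longrightarrow> S \<noteq> {} \<Longrightarrow> L \<in> Delta_plus \<Longrightarrow>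
   T (dsup S) L = dsup ((\<lambda>F. T F L) ` S)"
  using supc unfolding sup_continuous_tf_def by metis

lemma od_DP: "f \<in> Lip \<Longrightarrow> g \<in> Lip \<Longrightarrow> x \<in> carrier G \<Longrightarrow> od f g x \<in> Delta_plus"
  using od_val dsup_DP[OF OS_DP OS_ne] by simp

lemma od_Lip: assumes f: "f \<in> Lip" and g: "g \<in> Lip" shows "od f g \<in> Lip"
proof -
  have 1: "od f g \<in> carrier G \<rightarrow>\<^sub>E Delta_plus"
    using od_DP[OF f g] od_ext by (auto simp: PiE_iff)
  have 2: "T (D x w) (od f g w) \<le> od f g x" if x: "x \<in> carrier G" and w: "w \<in> carrier G" for x w
  proof -
    let ?S = "OS f g w"
    have S: "?S \<subseteq> Delta_plus" "?S \<noteq> {}" using OS_DP[OF f g] OS_ne[OF w] by auto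
    have Dxw: "D x w \<in> Delta_plus" using D_DP x w by simp
    have "T (D x w) (od f g w) = T (dsup ?S) (D x w)"
      using T_comm[OF Dxw dsup_DP[OF S]] od_val[OF w] by simp
    also have "\<dots> = dsup ((\<lambda>F. T F (D x w)) ` ?S)" by (rule supc_app[OF S Dxw])
    also have "\<dots> \<le> od f g x"
    proof (rule dsup_least)
      show "(\<lambda>F. T F (D x w)) ` ?S \<noteq> {}" using S by simp
      fix F' assume "F' \<in> (\<lambda>F. T F (D x w)) ` ?S"
      then obtain y z where yz: "y \<in> carrier G" "z \<in> carrier G" "y \<otimes> z = w"
        and F': "F' = T (T (f y) (g z)) (D x w)" by (auto simp: OS_def)
      define x' where "x' = inv y \<otimes> x"
      have x': "x' \<in> carrier G" using yz x by (simp add: x'_def)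
      have "inv y \<otimes> w = z" using yz(1,2) yz(3)[symmetric] by (simp add: m_assoc[symmetric])
      then have Dx: "D x w = D x' z" using D_linv[OF x w, of "inv y"] yz by (simp add: x'_def)
      have fy: "f y \<in> Delta_plus" and gz: "g z \<in> Delta_plus" and gx: "g x' \<in> Delta_plus"
        using Lip_DP f g yz x' by auto
      have Dz: "D x' z \<in> Delta_plus" using D_DP x' yz by simp
      have "F' = T (f y) (T (g z) (D x' z))" using F' T_assoc[OF fy gz Dz] Dx by simp
      also have "\<dots> = T (f y) (T (D x' z) (g z))" using T_comm[OF gz Dz] by simp
      also have "\<dots> \<le> T (f y) (g x')"
        by (rule T_mono2[OF fy T_DP[OF Dz gz] gx Lip_ineq[OF g x' yz(2)]])
      also have "\<dots> \<le> od f g (y \<otimes> x')" by (rule od_upper[OF f g yz(1) x'])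
      also have "y \<otimes> x' = x" using yz x by (simp add: x'_def m_assoc[symmetric])
      finally show "F' \<le> od f g x" .
    qed
    finally show ?thesis .
  qed
  show ?thesis using 1 2 by (simp add: Lip1_def)
qed

lemma pt_inj: "a \<in> carrier G \<Longrightarrow> b \<in> carrier G \<Longrightarrow> pt a = pt b \<Longrightarrow> a = b"
proof -
  assume ab: "a \<in> carrier G" "b \<in> carrier G" "pt a = pt b"
  then have "D a a = D b a" by (metis pt_def restrict_apply')
  then show "a = b" using D_H0 D_refl ab by metis
qed

lemma pt_PiG: assumes a: "a \<in> carrier G" shows "pt a \<in> PiG T (carrier G) D"
proof -
  have c: "pm_cauchy (carrier G) D (\<lambda>n. a)"
    using a by (simp add: pm_cauchy_def D_refl wconv_def case_prod_beta)
  have "\<forall>x\<in>carrier G. wconv (\<lambda>n. D a x) (pt a x) sequentially"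
    by (simp add: pt_def wconv_def)
  then show ?thesis using c pt_Lip[OF a] unfolding PiG_def by blast
qed

lemma DD_pt: assumes a: "a \<in> carrier G" and b: "b \<in> carrier G"
  shows "DD T (carrier G) (pt a) (pt b) = D a b"
proof -
  have eq: "(\<lambda>x. T (pt a x) (pt b x)) ` carrier G = (\<lambda>x. T (D a x) (D b x)) ` carrier G"
    by (rule image_cong) (auto simp: pt_def)
  have S: "(\<lambda>x. T (D a x) (D b x)) ` carrier G \<subseteq> Delta_plus" using a b D_DP T_DP by auto
  show ?thesis unfolding DD_def eq
  proof (rule antisym)
    show "dsup ((\<lambda>x. T (D a x) (D b x)) ` carrier G) \<le> D a b"
    proof (rule dsup_least)
      show "(\<lambda>x. T (D a x) (D b x)) ` carrier G \<noteq> {}" by blast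
      fix F assume "F \<in> (\<lambda>x. T (D a x) (D b x)) ` carrier G"
      then obtain x where x: "x \<in> carrier G" "F = T (D a x) (D b x)" by blast
      then show "F \<le> D a b" using D_tri[OF a x(1) b] D_sym[OF b x(1)] by simp
    qed
    have "D a b = T (D a a) (D b a)" using a b by (simp add: D_refl T_H0' D_DP D_sym[of b a])
    also have "\<dots> \<le> dsup ((\<lambda>x. T (D a x) (D b x)) ` carrier G)" by (rule dsup_upper[OF S]) (use a in auto)
    finally show "D a b \<le> dsup ((\<lambda>x. T (D a x) (D b x)) ` carrier G)" .
  qed
qed

end


context pmg begin

lemma D_shift: "p \<in> carrier G \<Longrightarrow> q \<in> carrier G \<Longrightarrow> D \<one> (p \<otimes> inv q) = D q p"
  using D_rinv[of \<one> "p \<otimes> inv q" q] by (simp add: m_assoc)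

lemma unit_pt:
  assumes h: "h \<in> Lip" and k: "k \<in> Lip" and hk: "od h k = pt \<one>"
  shows "\<exists>b\<in>carrier G. h = pt b"
proof -
  have hk_le: "T (h p) (k q) \<le> D \<one> (p \<otimes> q)" if p: "p \<in> carrier G" and q: "q \<in> carrier G" for p q
    using od_upper[OF h k p q] hk p q by (simp add: pt_def)
  have ex: "\<exists>y. y \<in> carrier G \<and> 1 - 1/real(Suc n) < T (h y) (k (inv y)) (ereal (1/real(Suc n)))" for n
  proof -
    let ?c = "ereal (1/real(Suc n))"
    have "od h k \<one> = H0" using hk by (simp add: pt_def D_refl)
    then have "dsup (OS h k \<one>) ?c = 1" using od_val[of \<one> h k] by (simp add: H0_def)
    then have "1 - 1/real(Suc n) < (SUP F\<in>OS h k \<one>. F ?c)" by (simp add: dsup_def)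
    then obtain F where F: "F \<in> OS h k \<one>" "1 - 1/real(Suc n) < F ?c"
      using less_cSUP_iff[OF OS_ne dsup_bdd[OF OS_DP[OF h k]]] by blast
    then obtain y z where yz: "y \<in> carrier G" "z \<in> carrier G" "y \<otimes> z = \<one>" "F = T (h y) (k z)"
      by (auto simp: OS_def)
    have "z \<otimes> y = \<one>" using inv_comm yz by blast
    then have "inv y = z" using inv_equality yz by blast
    then show ?thesis using yz F by blast
  qed
  then obtain y where yP: "\<And>n. y n \<in> carrier G \<and> 1 - 1/real(Suc n) < T (h (y n)) (k (inv (y n))) (ereal (1/real(Suc n)))"
    by metis
  have yc: "y n \<in> carrier G" for n using yP by blast
  have hy: "h (y n) \<in> Delta_plus" for n using Lip_DP[OF h yc] .
  have ky: "k (inv (y n)) \<in> Delta_plus" for n using Lip_DP[OF k] yc by simp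
  have TE: "E n \<le> T (h (y n)) (k (inv (y n)))" for n
    by (rule E_below[OF T_DP[OF hy ky]]) (use yP in blast)
  have hE: "E n \<le> h (y n)" for n using order_trans[OF TE T_le1[OF hy ky]] .
  have kE: "E n \<le> k (inv (y n))" for n using order_trans[OF TE T_le2[OF hy ky]] .
  define Q where "Q j = T (E j) (E j)" for j
  have Q_le: "Q (min n m) \<le> D (y n) (y m)" for n m
  proof -
    have "Q (min n m) \<le> T (h (y n)) (k (inv (y m)))" unfolding Q_def
      by (rule T_mono[OF E_DP hy E_DP ky])
         (use order_trans[OF E_mono hE] order_trans[OF E_mono kE] in auto)
    also have "\<dots> \<le> D \<one> (y n \<otimes> inv (y m))" using hk_le yc by simp
    also have "\<dots> = D (y n) (y m)" using D_shift[OF yc yc] D_sym yc by simp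
    finally show ?thesis .
  qed
  have wQ: "wconv Q H0 sequentially"
    using cont_app[OF cont E_DP E_DP H0_DP H0_DP E_wconv E_wconv] T_H0[OF H0_DP] by (simp add: Q_def[abs_def])
  have minlim: "filterlim (\<lambda>i. min (fst i) (snd i)) sequentially (sequentially \<times>\<^sub>F sequentially)"
    unfolding filterlim_at_top eventually_prod_sequentially by auto
  have cauchy: "pm_cauchy (carrier G) D y"
    unfolding pm_cauchy_def wconv_def
  proof (intro conjI allI impI)
    show "range y \<subseteq> carrier G" using yc by auto
    fix t :: real
    show "((\<lambda>i. (case i of (n, p) \<Rightarrow> D (y n) (y p)) (ereal t)) \<longlongrightarrow> H0 (ereal t)) (sequentially \<times>\<^sub>F sequentially)"
    proof (cases "t \<le> 0")
      case True
      have "(\<lambda>i. (case i of (n, p) \<Rightarrow> D (y n) (y p)) (ereal t)) = (\<lambda>i. 0)"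
        using True by (auto simp: split_beta intro!: DP_nonpos D_DP yc)
      then show ?thesis using True by (simp add: H0_def)
    next
      case False
      have Ht: "H0 (ereal t) = 1" using False by (simp add: H0_def)
      have "(\<lambda>j. Q j (ereal t)) \<longlonglongrightarrow> H0 (ereal t)"
        using wQ H0_isCont_pos[of t] False unfolding wconv_def by simp
      then have "(\<lambda>j. Q j (ereal t)) \<longlonglongrightarrow> 1" using Ht by simp
      then have l: "((\<lambda>i. Q (min (fst i) (snd i)) (ereal t)) \<longlongrightarrow> 1) (sequentially \<times>\<^sub>F sequentially)"
        using filterlim_compose[OF _ minlim] by blast
      have "((\<lambda>i. D (y (fst i)) (y (snd i)) (ereal t)) \<longlongrightarrow> 1) (sequentially \<times>\<^sub>F sequentially)"
      proof (rule tendsto_sandwich[OF _ _ l tendsto_const])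
        show "\<forall>\<^sub>F i in sequentially \<times>\<^sub>F sequentially. Q (min (fst i) (snd i)) (ereal t) \<le> D (y (fst i)) (y (snd i)) (ereal t)"
          using Q_le by (auto simp: le_fun_def)
        show "\<forall>\<^sub>F i in sequentially \<times>\<^sub>F sequentially. D (y (fst i)) (y (snd i)) (ereal t) \<le> 1"
          using DP_le1 D_DP yc by auto
      qed
      then show ?thesis using Ht by (simp add: split_beta)
    qed
  qed
  obtain b where b: "b \<in> carrier G" and wb': "wconv (\<lambda>n. D (y n) b) H0 sequentially"
    using compl cauchy unfolding pm_complete_def by blast
  have wb: "wconv (\<lambda>n. D b (y n)) H0 sequentially"
    using wb' D_sym[OF b yc] by simp
  have Dyb: "D (y n) b \<in> Delta_plus" "D b (y n) \<in> Delta_plus" for n using D_DP b yc by auto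
  show ?thesis
  proof (intro bexI[OF _ b] fun_eqI_ext[OF Lip_ext[OF h] pt_ext])
    fix x assume x: "x \<in> carrier G"
    have hx: "h x \<in> Delta_plus" using Lip_DP[OF h x] .
    have Dxb: "D x b \<in> Delta_plus" using D_DP x b by simp
    have Dxy: "D x (y n) \<in> Delta_plus" "D (y n) x \<in> Delta_plus" for n using D_DP x yc by auto
    define R where "R n = T (D x b) (T (D b (y n)) (E n))" for n
    have R_le: "R n \<le> h x" for n
    proof -
      have "R n = T (T (D x b) (D b (y n))) (E n)"
        unfolding R_def using T_assoc[OF Dxb Dyb(2) E_DP] by simp
      also have "\<dots> \<le> T (D x (y n)) (h (y n))"
        by (rule T_mono[OF T_DP[OF Dxb Dyb(2)] Dxy(1) E_DP hy D_tri[OF x b yc] hE])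
      also have "\<dots> \<le> h x" by (rule Lip_ineq[OF h x yc])
      finally show ?thesis .
    qed
    have winner: "wconv (\<lambda>n. T (D b (y n)) (E n)) H0 sequentially"
      using cont_app[OF cont Dyb(2) E_DP H0_DP H0_DP wb E_wconv] T_H0[OF H0_DP] by simp
    have wR: "wconv R (D x b) sequentially"
      using cont_app[OF cont Dxb T_DP[OF Dyb(2) E_DP] Dxb H0_DP wconv_const winner] T_H0[OF Dxb]
      by (simp add: R_def[abs_def])
    have low: "D x b \<le> h x" by (rule wconv_le[OF R_le wR Dxb hx])
    define P where "P n = T (T (h x) (E n)) (D (y n) b)" for n
    have P_le: "P n \<le> D x b" for n
    proof -
      have "T (h x) (E n) \<le> T (h x) (k (inv (y n)))" by (rule T_mono2[OF hx E_DP ky kE])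
      also have "\<dots> \<le> D \<one> (x \<otimes> inv (y n))" using hk_le x yc by simp
      also have "\<dots> = D (y n) x" using D_shift[OF x yc] .
      finally have 1: "T (h x) (E n) \<le> D (y n) x" .
      have "P n \<le> T (D (y n) x) (D (y n) b)"
        unfolding P_def by (rule T_mono1[OF T_DP[OF hx E_DP] Dxy(2) Dyb(1) 1])
      also have "\<dots> \<le> D x b" using D_tri[OF x yc b] D_sym[OF x yc] by simp
      finally show ?thesis .
    qed
    have winner2: "wconv (\<lambda>n. T (h x) (E n)) (h x) sequentially"
      using cont_app[OF cont hx E_DP hx H0_DP wconv_const E_wconv] T_H0[OF hx] by simp
    have wP: "wconv P (h x) sequentially"
      using cont_app[OF cont T_DP[OF hx E_DP] Dyb(1) hx H0_DP winner2 wb'] T_H0[OF hx]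
      by (simp add: P_def[abs_def])
    have up: "h x \<le> D x b" by (rule wconv_le[OF P_le wP hx Dxb])
    show "h x = pt b x" using low up x b D_sym[OF x b] by (simp add: pt_def)
  qed
qed

end


locale pmg2 = A: pmg T G D + B: pmg T G' D' for T G D G' D'
begin

definition tr where
  "tr J f = restrict (\<lambda>x'. f (J x')) (carrier G')"

context
  fixes J assumes J: "J \<in> iso G' G"
    and Jd: "\<And>x y. x \<in> carrier G' \<Longrightarrow> y \<in> carrier G' \<Longrightarrow> D (J x) (J y) = D' x y"
begin

lemma J_bij: "bij_betw J (carrier G') (carrier G)" using J by (simp add: iso_def)
lemma J_car: "x \<in> carrier G' \<Longrightarrow> J x \<in> carrier G" using J_bij by (meson bij_betwE)
lemma J_mult: "x \<in> carrier G' \<Longrightarrow> y \<in> carrier G' \<Longrightarrow> J (x \<otimes>\<^bsub>G'\<^esub> y) = J x \<otimes>\<^bsub>G\<^esub> J y"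
  using J by (simp add: iso_def hom_def)
lemma J_inj: "x \<in> carrier G' \<Longrightarrow> y \<in> carrier G' \<Longrightarrow> J x = J y \<Longrightarrow> x = y"
  using J_bij by (meson bij_betw_imp_inj_on inj_onD)
lemma J_surj: "z \<in> carrier G \<Longrightarrow> \<exists>x\<in>carrier G'. J x = z"
  using J_bij by (metis bij_betw_imp_surj_on imageE)
lemma J_img: "J ` carrier G' = carrier G" using J_bij by (simp add: bij_betw_def)

lemma tr_Lip: assumes f: "f \<in> A.Lip" shows "tr J f \<in> B.Lip"
proof -
  have 1: "tr J f \<in> carrier G' \<rightarrow>\<^sub>E Delta_plus"
    using A.Lip_DP[OF f] J_car by (auto simp: tr_def)
  have 2: "T (D' x y) (tr J f y) \<le> tr J f x" if "x \<in> carrier G'" "y \<in> carrier G'" for x y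
    using A.Lip_ineq[OF f J_car J_car] that Jd by (simp add: tr_def)
  show ?thesis using 1 2 by (simp add: Lip1_def)
qed

lemma tr_od: assumes f: "f \<in> A.Lip" and g: "g \<in> A.Lip"
  shows "tr J (A.od f g) = B.od (tr J f) (tr J g)"
proof (rule B.fun_eqI_ext)
  show "tr J (A.od f g) \<in> extensional (carrier G')" by (simp add: tr_def)
  show "B.od (tr J f) (tr J g) \<in> extensional (carrier G')" by (rule B.od_ext)
  fix x assume x: "x \<in> carrier G'"
  have "A.OS f g (J x) = B.OS (tr J f) (tr J g) x"
  proof
    show "A.OS f g (J x) \<subseteq> B.OS (tr J f) (tr J g) x"
    proof
      fix F assume "F \<in> A.OS f g (J x)"
      then obtain y z where yz: "y \<in> carrier G" "z \<in> carrier G" "y \<otimes>\<^bsub>G\<^esub> z = J x" "F = T (f y) (g z)"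
        by (auto simp: A.OS_def)
      obtain y' z' where y'z': "y' \<in> carrier G'" "z' \<in> carrier G'" "J y' = y" "J z' = z"
        using J_surj yz by metis
      have "y' \<otimes>\<^bsub>G'\<^esub> z' = x" using J_inj[OF _ x] J_mult y'z' yz by simp
      then show "F \<in> B.OS (tr J f) (tr J g) x"
        using y'z' yz unfolding B.OS_def by (auto simp: tr_def)
    qed
    show "B.OS (tr J f) (tr J g) x \<subseteq> A.OS f g (J x)"
    proof
      fix F assume "F \<in> B.OS (tr J f) (tr J g) x"
      then obtain y z where yz: "y \<in> carrier G'" "z \<in> carrier G'" "y \<otimes>\<^bsub>G'\<^esub> z = x" "F = T (tr J f y) (tr J g z)"
        by (auto simp: B.OS_def)
      have "J y \<otimes>\<^bsub>G\<^esub> J z = J x" using J_mult yz by metis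
      then show "F \<in> A.OS f g (J x)" using yz J_car unfolding A.OS_def by (auto simp: tr_def)
    qed
  qed
  then show "tr J (A.od f g) x = B.od (tr J f) (tr J g) x"
    using x A.od_val[OF J_car[OF x]] B.od_val[OF x] by (simp add: tr_def)
qed

lemma tr_PiG: assumes f: "f \<in> PiG T (carrier G) D" shows "tr J f \<in> PiG T (carrier G') D'"
proof -
  from f obtain a where fL: "f \<in> A.Lip" and ac: "pm_cauchy (carrier G) D a"
    and aw: "\<forall>x\<in>carrier G. wconv (\<lambda>n. D (a n) x) (f x) sequentially"
    by (auto simp: PiG_def)
  define a' where "a' n = inv_into (carrier G') J (a n)" for n
  have ar: "a n \<in> carrier G" for n using ac by (auto simp: pm_cauchy_def)
  have a'c: "a' n \<in> carrier G'" for n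
    using ar J_img by (metis a'_def inv_into_into)
  have Ja': "J (a' n) = a n" for n
    using ar J_img by (metis a'_def f_inv_into_f)
  have D'a: "D' (a' n) x = D (a n) (J x)" if "x \<in> carrier G'" for n x
    using Jd[OF a'c that] Ja' by simp
  have "pm_cauchy (carrier G') D' a'"
    using ac a'c Jd[OF a'c a'c] Ja' unfolding pm_cauchy_def by (auto simp: case_prod_beta)
  moreover have "\<forall>x\<in>carrier G'. wconv (\<lambda>n. D' (a' n) x) (tr J f x) sequentially"
    using aw J_car D'a by (simp add: tr_def)
  ultimately show ?thesis using tr_Lip[OF fL] unfolding PiG_def by blast
qed

lemma tr_DD: "DD T (carrier G') (tr J f) (tr J g) = DD T (carrier G) f g"
proof -
  have "(\<lambda>x. T (tr J f x) (tr J g x)) ` carrier G' = (\<lambda>x. T (f x) (g x)) ` (J ` carrier G')"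
    by (auto simp: tr_def image_image)
  then show ?thesis unfolding DD_def J_img by simp
qed

end
end



context pmg2 begin

lemma backward:
  assumes I: "I \<in> iso G G'" and Id: "\<forall>x\<in>carrier G. \<forall>y\<in>carrier G. D' (I x) (I y) = D x y"
  shows "\<exists>\<Phi>. bij_betw \<Phi> (Lip1 T (carrier G) D) (Lip1 T (carrier G') D')
            \<and> (\<forall>f\<in>Lip1 T (carrier G) D. \<forall>g\<in>Lip1 T (carrier G) D.
                  \<Phi> (odot T G f g) = odot T G' (\<Phi> f) (\<Phi> g))
            \<and> (\<forall>f\<in>Lip1 T (carrier G) D. \<forall>g\<in>Lip1 T (carrier G) D.
                  DDbar T (carrier G') D' (\<Phi> f) (\<Phi> g) = DDbar T (carrier G) D f g)"
proof -
  interpret S: pmg2 T G' D' G D by unfold_locales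
  define J where "J = inv_into (carrier G) I"
  have Ibij: "bij_betw I (carrier G) (carrier G')" using I by (simp add: iso_def)
  have J: "J \<in> iso G' G" unfolding J_def by (rule A.iso_set_sym[OF I])
  have JI: "J (I x) = x" if "x \<in> carrier G" for x
    using Ibij that unfolding J_def by (simp add: bij_betw_def inv_into_f_f)
  have IJ: "I (J x) = x" if "x \<in> carrier G'" for x
    using Ibij that unfolding J_def by (metis bij_betw_def f_inv_into_f)
  have Jc: "J x \<in> carrier G" if "x \<in> carrier G'" for x
    using J that by (simp add: iso_def hom_def Pi_iff)
  have Jd: "D (J x) (J y) = D' x y" if "x \<in> carrier G'" "y \<in> carrier G'" for x y
    using Id Jc that IJ by metis
  have Id': "D' (I x) (I y) = D x y" if "x \<in> carrier G" "y \<in> carrier G" for x y using Id that by blast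
  let ?\<Phi> = "tr J" and ?\<Psi> = "S.tr I"
  have PsiPhi: "?\<Psi> (?\<Phi> f) = f" if f: "f \<in> A.Lip" for f
  proof (rule A.fun_eqI_ext[OF _ A.Lip_ext[OF f]])
    show "?\<Psi> (?\<Phi> f) \<in> extensional (carrier G)" by (simp add: S.tr_def)
    fix x assume "x \<in> carrier G"
    then show "?\<Psi> (?\<Phi> f) x = f x" using JI Ibij by (simp add: S.tr_def tr_def bij_betwE)
  qed
  have PhiPsi: "?\<Phi> (?\<Psi> g) = g" if g: "g \<in> B.Lip" for g
  proof (rule B.fun_eqI_ext[OF _ B.Lip_ext[OF g]])
    show "?\<Phi> (?\<Psi> g) \<in> extensional (carrier G')" by (simp add: tr_def)
    fix x assume "x \<in> carrier G'"
    then show "?\<Phi> (?\<Psi> g) x = g x" using IJ Jc by (simp add: S.tr_def tr_def)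
  qed
  have PhiL: "?\<Phi> f \<in> B.Lip" if "f \<in> A.Lip" for f using tr_Lip[OF J Jd that] .
  have PsiL: "?\<Psi> g \<in> A.Lip" if "g \<in> B.Lip" for g using S.tr_Lip[OF I Id' that] .
  have bij: "bij_betw ?\<Phi> A.Lip B.Lip"
    by (rule bij_betw_byWitness[where f'="?\<Psi>"]) (use PsiPhi PhiPsi PhiL PsiL in auto)
  have PiG_iff: "?\<Phi> f \<in> PiG T (carrier G') D' \<longleftrightarrow> f \<in> PiG T (carrier G) D" if f: "f \<in> A.Lip" for f
    using tr_PiG[OF J Jd] S.tr_PiG[OF I Id', of "?\<Phi> f"] PsiPhi[OF f] by metis
  have DDbar: "DDbar T (carrier G') D' (?\<Phi> f) (?\<Phi> g) = DDbar T (carrier G) D f g"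
    if f: "f \<in> A.Lip" and g: "g \<in> A.Lip" for f g
  proof -
    have "?\<Phi> f = ?\<Phi> g \<longleftrightarrow> f = g" using PsiPhi f g by metis
    then show ?thesis using PiG_iff[OF f] PiG_iff[OF g] tr_DD[OF J Jd, of f g]
      unfolding DDbar_def by simp
  qed
  show ?thesis
    using bij tr_od[OF J Jd] DDbar by blast
qed

lemma forward:
  assumes bij: "bij_betw \<Phi> (Lip1 T (carrier G) D) (Lip1 T (carrier G') D')"
    and hom: "\<forall>f\<in>Lip1 T (carrier G) D. \<forall>g\<in>Lip1 T (carrier G) D.
                  \<Phi> (odot T G f g) = odot T G' (\<Phi> f) (\<Phi> g)"
    and iso: "\<forall>f\<in>Lip1 T (carrier G) D. \<forall>g\<in>Lip1 T (carrier G) D.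
                  DDbar T (carrier G') D' (\<Phi> f) (\<Phi> g) = DDbar T (carrier G) D f g"
  shows "\<exists>I. I \<in> iso G G' \<and> (\<forall>x\<in>carrier G. \<forall>y\<in>carrier G. D' (I x) (I y) = D x y)"
proof -
  have PhiL: "\<Phi> f \<in> B.Lip" if "f \<in> A.Lip" for f using bij_betwE[OF bij] that by blast
  have Phiinj: "f = g" if "f \<in> A.Lip" "g \<in> A.Lip" "\<Phi> f = \<Phi> g" for f g
    using bij that by (meson bij_betw_imp_inj_on inj_onD)
  have Phisurj: "\<exists>f\<in>A.Lip. \<Phi> f = g" if "g \<in> B.Lip" for g
    using bij that by (metis bij_betw_imp_surj_on imageE)
  have one: "\<Phi> (A.pt \<one>\<^bsub>G\<^esub>) = B.pt \<one>\<^bsub>G'\<^esub>"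
  proof -
    obtain u where u: "u \<in> A.Lip" "\<Phi> u = B.pt \<one>\<^bsub>G'\<^esub>" using Phisurj B.pt_Lip by blast
    have "\<Phi> u = \<Phi> (A.od (A.pt \<one>\<^bsub>G\<^esub>) u)" using A.od_unit_left[OF u(1)] by simp
    also have "\<dots> = B.od (\<Phi> (A.pt \<one>\<^bsub>G\<^esub>)) (B.pt \<one>\<^bsub>G'\<^esub>)"
      using hom A.pt_Lip u by simp
    also have "\<dots> = \<Phi> (A.pt \<one>\<^bsub>G\<^esub>)" by (rule B.od_unit_right[OF PhiL[OF A.pt_Lip]]) simp
    finally show ?thesis using u by simp
  qed
  have ptmap: "\<exists>b. b \<in> carrier G' \<and> \<Phi> (A.pt a) = B.pt b" if a: "a \<in> carrier G" for a
  proof -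
    have ai: "inv\<^bsub>G\<^esub> a \<in> carrier G" using a by simp
    have "B.od (\<Phi> (A.pt a)) (\<Phi> (A.pt (inv\<^bsub>G\<^esub> a))) = \<Phi> (A.od (A.pt a) (A.pt (inv\<^bsub>G\<^esub> a)))"
      using hom A.pt_Lip a ai by simp
    also have "\<dots> = B.pt \<one>\<^bsub>G'\<^esub>" using A.od_pt[OF a ai] a one by simp
    finally show ?thesis using B.unit_pt[OF PhiL[OF A.pt_Lip[OF a]] PhiL[OF A.pt_Lip[OF ai]]] by blast
  qed
  define I where "I a = (SOME b. b \<in> carrier G' \<and> \<Phi> (A.pt a) = B.pt b)" for a
  have Ip: "I a \<in> carrier G' \<and> \<Phi> (A.pt a) = B.pt (I a)" if "a \<in> carrier G" for a
    unfolding I_def by (rule someI_ex[OF ptmap[OF that]])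
  have Ic: "I a \<in> carrier G'" if "a \<in> carrier G" for a using Ip that by blast
  have Ipt: "\<Phi> (A.pt a) = B.pt (I a)" if "a \<in> carrier G" for a using Ip that by blast
  have Imult: "I (a \<otimes>\<^bsub>G\<^esub> b) = I a \<otimes>\<^bsub>G'\<^esub> I b" if a: "a \<in> carrier G" and b: "b \<in> carrier G" for a b
  proof -
    have "B.pt (I (a \<otimes>\<^bsub>G\<^esub> b)) = \<Phi> (A.od (A.pt a) (A.pt b))"
      using Ipt a b A.od_pt by simp
    also have "\<dots> = B.od (B.pt (I a)) (B.pt (I b))" using hom A.pt_Lip a b Ipt by simp
    also have "\<dots> = B.pt (I a \<otimes>\<^bsub>G'\<^esub> I b)" using B.od_pt Ic a b by simp
    finally show ?thesis using B.pt_inj Ic a b by simp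
  qed
  have Iinj: "inj_on I (carrier G)"
  proof (rule inj_onI)
    fix a b assume ab: "a \<in> carrier G" "b \<in> carrier G" "I a = I b"
    then have "\<Phi> (A.pt a) = \<Phi> (A.pt b)" using Ipt by simp
    then have "A.pt a = A.pt b" using Phiinj A.pt_Lip ab by simp
    then show "a = b" using A.pt_inj ab by simp
  qed
  have Isurj: "I ` carrier G = carrier G'"
  proof
    show "I ` carrier G \<subseteq> carrier G'" using Ic by auto
    show "carrier G' \<subseteq> I ` carrier G"
    proof
      fix b assume b: "b \<in> carrier G'"
      have bi: "inv\<^bsub>G'\<^esub> b \<in> carrier G'" using b by simp
      obtain h where h: "h \<in> A.Lip" "\<Phi> h = B.pt b" using Phisurj B.pt_Lip[OF b] by blast
      obtain k where k: "k \<in> A.Lip" "\<Phi> k = B.pt (inv\<^bsub>G'\<^esub> b)" using Phisurj B.pt_Lip[OF bi] by blast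
      have "\<Phi> (A.od h k) = B.pt \<one>\<^bsub>G'\<^esub>" using hom h k B.od_pt[OF b bi] b by simp
      then have "A.od h k = A.pt \<one>\<^bsub>G\<^esub>" using Phiinj A.od_Lip[OF h(1) k(1)] A.pt_Lip one by simp
      then obtain a where a: "a \<in> carrier G" "h = A.pt a" using A.unit_pt[OF h(1) k(1)] by blast
      then have "B.pt (I a) = B.pt b" using Ipt h by simp
      then have "I a = b" using B.pt_inj Ic a b by simp
      then show "b \<in> I ` carrier G" using a by blast
    qed
  qed
  have "I \<in> iso G G'"
    using Ic Imult Iinj Isurj by (auto simp: iso_def hom_def bij_betw_def)
  moreover have "D' (I x) (I y) = D x y" if x: "x \<in> carrier G" and y: "y \<in> carrier G" for x y
  proof -
    have "DDbar T (carrier G') D' (\<Phi> (A.pt x)) (\<Phi> (A.pt y)) = DDbar T (carrier G) D (A.pt x) (A.pt y)"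
      using iso A.pt_Lip x y by simp
    then show ?thesis using Ipt x y Ic B.pt_PiG A.pt_PiG B.DD_pt A.DD_pt by (simp add: DDbar_def)
  qed
  ultimately show ?thesis by blast
qed

end

theorem mainTheorem17:
  fixes T :: "dfun \<Rightarrow> dfun \<Rightarrow> dfun"
    and G :: "('a, 'c) monoid_scheme" and D :: "'a \<Rightarrow> 'a \<Rightarrow> dfun"
    and G' :: "('b, 'd) monoid_scheme" and D' :: "'b \<Rightarrow> 'b \<Rightarrow> dfun"
  assumes "triangle_function T" and "continuous_tf T" and "sup_continuous_tf T"
    and "units_Delta T = {H0}"
    and "inv_pm_group G D T" and "pm_complete (carrier G) D"
    and "inv_pm_group G' D' T" and "pm_complete (carrier G') D'"
  shows "(\<exists>I. I \<in> iso G G' \<and> (\<forall>x\<in>carrier G. \<forall>y\<in>carrier G. D' (I x) (I y) = D x y))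
     \<longleftrightarrow> (\<exists>\<Phi>. bij_betw \<Phi> (Lip1 T (carrier G) D) (Lip1 T (carrier G') D')
            \<and> (\<forall>f\<in>Lip1 T (carrier G) D. \<forall>g\<in>Lip1 T (carrier G) D.
                  \<Phi> (odot T G f g) = odot T G' (\<Phi> f) (\<Phi> g))
            \<and> (\<forall>f\<in>Lip1 T (carrier G) D. \<forall>g\<in>Lip1 T (carrier G) D.
                  DDbar T (carrier G') D' (\<Phi> f) (\<Phi> g) = DDbar T (carrier G) D f g))"
proof -
  interpret P: pmg2 T G D G' D'
    using assms by (simp add: pmg2_def pmg_def pmg_axioms_def tfun_def)
  show ?thesis using P.forward P.backward by blast
qed


end
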